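(* Let $\Theta$ be a parameter space, $L(\boldsymbol{\theta}\mid D)$, $L(\boldsymbol{\theta}\mid D_0)$ likelihoods of the current and historical data, $\xi\in[0,1]$, $\alpha\in(-1,\infty)$, $z=(1+\alpha)/2$, and let $\pi_0,\tilde\pi_0$ be two baseline prior densities. Let $g^*$ (resp. $\tilde g^*$) be the generalized power posterior with baseline prior $\pi_0$ (resp. $\tilde\pi_0$): $$g^*(\boldsymbol{\theta})\propto\{(1-\xi)p_0(\boldsymbol{\theta})^z+\xi p_1(\boldsymbol{\theta})^z\}^{1/z},\quad p_0=L(\cdot\mid D)\pi_0,\ p_1=L(\cdot\mid D)L(\cdot\mid D_0)\pi_0,$$ and $\tilde g^*$ defined likewise with $\tilde\pi_0$ in place of $\pi_0$. Assume there is a measurable $\mathcal{A}\subset\Theta$ with $\pi_0(\mathcal{A})=\tilde\pi_0(\mathcal{A})=1$ and constants $0<m_L\le1\le M_L<\infty$ such that $m_L\le L(\boldsymbol{\theta}\mid D)\le M_L$ and $m_L\le L(\boldsymbol{\theta}\mid D_0)\le M_L$ for all $\boldsymbol{\theta}\in\mathcal{A}$, and constants $0<m_\pi\le1\le M_\pi$ with $m_\pi\le\pi_0(\boldsymbol{\theta})\le M_\pi$ and $m_\pi\le\tilde\pi_0(\boldsymbol{\theta})\le M_\pi$ for all $\boldsymbol{\theta}\in\Theta$. Then there exists a function $\alpha\mapsto K(\alpha)$ on $(-1,\infty)$ such that $$d_{\mathrm{TV}}(g^*,\tilde g^* )\le K(\alpha)\,d_{\mathrm{TV}}(\pi_0,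\tilde\pi_0).$$
   Context: $d_{\mathrm{TV}}(p,q)=\frac12\int_\Theta|p(\boldsymbol{\theta})-q(\boldsymbol{\theta})|d\boldsymbol{\theta}$. *)

theory Defs
  imports "HOL-Analysis.Analysis"
begin

definition prob_density :: "'a measure \<Rightarrow> ('a \<Rightarrow> real) \<Rightarrow> bool" where
  "prob_density M p \<longleftrightarrow> p \<in> borel_measurable M \<and> (\<forall>x\<in>space M. 0 \<le> p x)
     \<and> integrable M p \<and> (\<integral>x. p x \<partial>M) = 1"

definition dTV :: "'a measure \<Rightarrow> ('a \<Rightarrow> real) \<Rightarrow> ('a \<Rightarrow> real) \<Rightarrow> real" where
  "dTV M p q = 1/2 * (\<integral>x. \<bar>p x - q x\<bar> \<partial>M)"

definition gpp_unnorm :: "('a \<Rightarrow> real) \<Rightarrow> ('a \<Rightarrow> real) \<Rightarrow> real \<Rightarrow> real \<Rightarrow> ('a \<Rightarrow> real) \<Rightarrow> 'a \<Rightarrow> real" where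
  "gpp_unnorm L L0 \<xi> \<alpha> \<pi>0 \<theta> =
     (let z = (1 + \<alpha>) / 2;
          p0 = L \<theta> * \<pi>0 \<theta>;
          p1 = L \<theta> * L0 \<theta> * \<pi>0 \<theta>
      in ((1 - \<xi>) * p0 powr z + \<xi> * p1 powr z) powr (1 / z))"

definition gpp :: "'a measure \<Rightarrow> ('a \<Rightarrow> real) \<Rightarrow> ('a \<Rightarrow> real) \<Rightarrow> real \<Rightarrow> real \<Rightarrow> ('a \<Rightarrow> real) \<Rightarrow> 'a \<Rightarrow> real" where
  "gpp M L L0 \<xi> \<alpha> \<pi>0 \<theta> =
     gpp_unnorm L L0 \<xi> \<alpha> \<pi>0 \<theta> / (\<integral>t. gpp_unnorm L L0 \<xi> \<alpha> \<pi>0 t \<partial>M)"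

end

theory Submission
  imports Defs
begin

lemma gpp_factor:
  assumes "0 \<le> L \<theta>" "0 \<le> L0 \<theta>" "0 \<le> p \<theta>" "\<alpha> > -1" "0 \<le> \<xi>" "\<xi> \<le> 1"
  shows "gpp_unnorm L L0 \<xi> \<alpha> p \<theta> = p \<theta> * gpp_unnorm L L0 \<xi> \<alpha> (\<lambda>_. 1) \<theta>"
proof -
  define z where "z = (1 + \<alpha>) / 2"
  have z: "z > 0" using assms z_def by simp
  define X where "X = (1 - \<xi>) * (L \<theta>) powr z + \<xi> * (L \<theta> * L0 \<theta>) powr z"
  have X: "X \<ge> 0" unfolding X_def using assms by simp
  have "(1 - \<xi>) * (L \<theta> * p \<theta>) powr z + \<xi> * (L \<theta> * L0 \<theta> * p \<theta>) powr z
        = p \<theta> powr z * X"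
    unfolding X_def using assms by (simp add: powr_mult algebra_simps)
  then have "((1 - \<xi>) * (L \<theta> * p \<theta>) powr z + \<xi> * (L \<theta> * L0 \<theta> * p \<theta>) powr z) powr (1/z)
        = (p \<theta> powr z) powr (1/z) * X powr (1/z)"
    using X assms by (simp add: powr_mult)
  also have "(p \<theta> powr z) powr (1/z) = p \<theta>" using z assms by (simp add: powr_powr)
  finally show ?thesis unfolding gpp_unnorm_def Let_def z_def[symmetric] X_def by simp
qed

lemma gpp_bounds:
  assumes "0 < m" "m \<le> 1" "1 \<le> Mx" "m \<le> L \<theta>" "L \<theta> \<le> Mx" "m \<le> L0 \<theta>" "L0 \<theta> \<le> Mx"
    "\<alpha> > -1" "0 \<le> \<xi>" "\<xi> \<le> 1"
  shows "m^2 \<le> gpp_unnorm L L0 \<xi> \<alpha> (\<lambda>_. 1) \<theta> \<and> gpp_unnorm L L0 \<xi> \<alpha> (\<lambda>_. 1) \<theta> \<le> Mx^2"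
proof -
  define z where "z = (1 + \<alpha>) / 2"
  have z: "z > 0" using assms z_def by simp
  define Y where "Y = (1 - \<xi>) + \<xi> * L0 \<theta> powr z"
  have eq: "gpp_unnorm L L0 \<xi> \<alpha> (\<lambda>_. 1) \<theta> = (L \<theta> powr z * Y) powr (1/z)"
    unfolding gpp_unnorm_def Let_def z_def[symmetric] Y_def using assms
    by (simp add: powr_mult algebra_simps)
  have m1: "m powr z \<le> 1" using assms z by (simp add: powr_le1)
  have M1: "1 \<le> Mx powr z" using assms z by (simp add: ge_one_powr_ge_zero)
  have l1: "m powr z \<le> L \<theta> powr z" using assms z by (simp add: powr_mono2)
  have l2: "m powr z \<le> L0 \<theta> powr z" using assms z by (simp add: powr_mono2)
  have u1: "L \<theta> powr z \<le> Mx powr z" using assms z by (simp add: powr_mono2)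
  have u2: "L0 \<theta> powr z \<le> Mx powr z" using assms z by (simp add: powr_mono2)
  have Yl: "m powr z \<le> Y"
  proof -
    have "m powr z = (1-\<xi>) * m powr z + \<xi> * m powr z" by (simp add: algebra_simps)
    also have "\<dots> \<le> (1-\<xi>) * 1 + \<xi> * L0 \<theta> powr z"
      using m1 l2 assms by (intro add_mono mult_left_mono) auto
    finally show ?thesis unfolding Y_def by simp
  qed
  have Yu: "Y \<le> Mx powr z"
  proof -
    have a: "(1-\<xi>) * 1 \<le> (1-\<xi>) * Mx powr z" using M1 assms by (intro mult_left_mono) auto
    have b: "\<xi> * L0 \<theta> powr z \<le> \<xi> * Mx powr z" using u2 assms by (intro mult_left_mono) auto
    have "Y \<le> (1-\<xi>) * Mx powr z + \<xi> * Mx powr z" unfolding Y_def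
      using a b by simp
    also have "\<dots> = Mx powr z" by (simp add: algebra_simps)
    finally show ?thesis .
  qed
  have mpos: "0 \<le> m powr z" by simp
  have Y0: "0 \<le> Y" using Yl mpos by linarith
  have "m powr z * m powr z \<le> L \<theta> powr z * Y"
    using l1 Yl mpos by (intro mult_mono) auto
  hence "(m powr z * m powr z) powr (1/z) \<le> (L \<theta> powr z * Y) powr (1/z)"
    using z by (intro powr_mono2) auto
  moreover have "(m powr z * m powr z) powr (1/z) = m^2"
    using z assms by (simp add: powr_mult powr_powr power2_eq_square)
  moreover have "L \<theta> powr z * Y \<le> Mx powr z * Mx powr z"
    using u1 Yu Y0 by (intro mult_mono) auto
  hence "(L \<theta> powr z * Y) powr (1/z) \<le> (Mx powr z * Mx powr z) powr (1/z)"
    using z Y0 by (intro powr_mono2) auto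
  moreover have "(Mx powr z * Mx powr z) powr (1/z) = Mx^2"
    using z assms by (simp add: powr_mult powr_powr power2_eq_square)
  ultimately show ?thesis using eq by simp
qed


lemma aux_bd: "0 \<le> (p::real) \<Longrightarrow> 0 < m \<Longrightarrow> m \<le> h \<and> h \<le> Mx \<Longrightarrow> norm (p * h) \<le> norm (Mx * p)"
proof -
  assume a: "0 \<le> p" "0 < m" "m \<le> h \<and> h \<le> Mx"
  have "norm (p * h) = p * h" using a by simp
  also have "\<dots> \<le> p * Mx" using a by (intro mult_left_mono) auto
  also have "\<dots> \<le> norm (Mx * p)" by (simp add: mult.commute)
  finally show ?thesis .
qed

lemma tv_main:
  fixes h p q f f' :: "'a \<Rightarrow> real"
  assumes hm: "h \<in> borel_measurable M" and fm: "f \<in> borel_measurable M" and fm': "f' \<in> borel_measurable M"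
    and pd: "prob_density M p" and qd: "prob_density M q"
    and m: "0 < m" and mM: "m \<le> Mx" and hb: "AE x in M. m \<le> h x \<and> h x \<le> Mx"
    and fe: "AE x in M. f x = p x * h x" and fe': "AE x in M. f' x = q x * h x"
  shows "dTV M (\<lambda>x. f x / (\<integral>t. f t \<partial>M)) (\<lambda>x. f' x / (\<integral>t. f' t \<partial>M)) \<le> (2 * Mx / m) * dTV M p q"
proof -
  have pm: "p \<in> borel_measurable M" and p0: "\<forall>x\<in>space M. 0 \<le> p x" and pi: "integrable M p"
    and p1: "(\<integral>x. p x \<partial>M) = 1" using pd unfolding prob_density_def by auto
  have qm: "q \<in> borel_measurable M" and q0: "\<forall>x\<in>space M. 0 \<le> q x" and qi: "integrable M q"
    and q1: "(\<integral>x. q x \<partial>M) = 1" using qd unfolding prob_density_def by auto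
  have phi: "integrable M (\<lambda>x. p x * h x)"
    apply (rule Bochner_Integration.integrable_bound[where f="\<lambda>x. Mx * p x"])
    using pi apply simp
    using pm hm apply measurable
    using hb AE_space by eventually_elim (use p0 m aux_bd in blast)
  have qhi: "integrable M (\<lambda>x. q x * h x)"
    apply (rule Bochner_Integration.integrable_bound[where f="\<lambda>x. Mx * q x"])
    using qi apply simp
    using qm hm apply measurable
    using hb AE_space by eventually_elim (use q0 m aux_bd in blast)
  define c where "c = (\<integral>x. p x * h x \<partial>M)"
  define c' where "c' = (\<integral>x. q x * h x \<partial>M)"
  have cf: "(\<integral>t. f t \<partial>M) = c" unfolding c_def
    by (rule integral_cong_AE) (use fm pm hm fe in auto)
  have cf': "(\<integral>t. f' t \<partial>M) = c'" unfolding c'_def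
    by (rule integral_cong_AE) (use fm' qm hm fe' in auto)
  have cm: "m \<le> c"
  proof -
    have "m = (\<integral>x. m * p x \<partial>M)" using p1 by simp
    also have "\<dots> \<le> c" unfolding c_def
    proof (rule integral_mono_AE)
      show "AE x in M. m * p x \<le> p x * h x"
        using hb AE_space by eventually_elim (use p0 in \<open>auto simp: mult.commute intro: mult_right_mono\<close>)
    qed (use pi phi in auto)
    finally show ?thesis .
  qed
  have cm': "m \<le> c'"
  proof -
    have "m = (\<integral>x. m * q x \<partial>M)" using q1 by simp
    also have "\<dots> \<le> c'" unfolding c'_def
    proof (rule integral_mono_AE)
      show "AE x in M. m * q x \<le> q x * h x"
        using hb AE_space by eventually_elim (use q0 in \<open>auto simp: mult.commute intro: mult_right_mono\<close>)
    qed (use qi qhi in auto)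
    finally show ?thesis .
  qed
  define D where "D = (\<integral>x. \<bar>p x - q x\<bar> \<partial>M)"
  have Di: "integrable M (\<lambda>x. \<bar>p x - q x\<bar>)" using pi qi by auto
  have D0: "0 \<le> D" unfolding D_def by simp
  have cdiff: "\<bar>c' - c\<bar> \<le> Mx * D"
  proof -
    have "c' - c = (\<integral>x. (q x - p x) * h x \<partial>M)" unfolding c_def c'_def
      using phi qhi by (simp add: left_diff_distrib)
    also have "\<bar>\<dots>\<bar> \<le> (\<integral>x. \<bar>(q x - p x) * h x\<bar> \<partial>M)" by (rule integral_abs_bound)
    also have "\<dots> \<le> (\<integral>x. Mx * \<bar>p x - q x\<bar> \<partial>M)"
      apply (rule integral_mono_AE)
      using phi qhi Di apply (auto simp: left_diff_distrib)[2]
      using hb by eventually_elim (use m in \<open>auto simp: abs_mult abs_minus_commute mult.commute intro!: mult_right_mono\<close>)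
    also have "\<dots> = Mx * D" unfolding D_def by simp
    finally show ?thesis .
  qed
  have "(\<integral>x. \<bar>f x / c - f' x / c'\<bar> \<partial>M) = (\<integral>x. \<bar>p x * h x / c - q x * h x / c'\<bar> \<partial>M)"
    by (rule integral_cong_AE) (use fm fm' pm qm hm in simp_all, use fe fe' in eventually_elim, simp)
  also have "\<dots> \<le> (\<integral>x. (Mx / m) * \<bar>p x - q x\<bar> + \<bar>1/c - 1/c'\<bar> * (q x * h x) \<partial>M)"
  proof (rule integral_mono_AE)
    show "integrable M (\<lambda>x. \<bar>p x * h x / c - q x * h x / c'\<bar>)" using phi qhi by auto
    show "integrable M (\<lambda>x. (Mx / m) * \<bar>p x - q x\<bar> + \<bar>1/c - 1/c'\<bar> * (q x * h x))" using Di qhi by auto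
    show "AE x in M. \<bar>p x * h x / c - q x * h x / c'\<bar> \<le> (Mx / m) * \<bar>p x - q x\<bar> + \<bar>1/c - 1/c'\<bar> * (q x * h x)"
      using hb AE_space
    proof eventually_elim
      fix x assume x: "m \<le> h x \<and> h x \<le> Mx" and xs: "x \<in> space M"
      have e: "p x * h x / c - q x * h x / c' = h x * (p x - q x) / c + (1/c - 1/c') * (q x * h x)"
        using cm cm' m by (simp add: field_simps)
      have 1: "\<bar>h x * (p x - q x) / c\<bar> \<le> (Mx / m) * \<bar>p x - q x\<bar>"
      proof -
        have "\<bar>h x * (p x - q x) / c\<bar> = h x * \<bar>p x - q x\<bar> / c" using x m cm by (simp add: abs_mult)
        also have "\<dots> \<le> Mx * \<bar>p x - q x\<bar> / m"
          using x m cm by (intro frac_le mult_right_mono) auto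
        finally show ?thesis by simp
      qed
      have 2: "\<bar>(1/c - 1/c') * (q x * h x)\<bar> = \<bar>1/c - 1/c'\<bar> * (q x * h x)"
        using x m q0 xs by (simp add: abs_mult)
      show "\<bar>p x * h x / c - q x * h x / c'\<bar> \<le> (Mx / m) * \<bar>p x - q x\<bar> + \<bar>1/c - 1/c'\<bar> * (q x * h x)"
        unfolding e using 1 2 abs_triangle_ineq[of "h x * (p x - q x) / c" "(1/c - 1/c') * (q x * h x)"] by linarith
    qed
  qed
  also have "\<dots> = (Mx / m) * D + \<bar>1/c - 1/c'\<bar> * c'"
    unfolding D_def c'_def using Di qhi by simp
  also have "\<bar>1/c - 1/c'\<bar> * c' = \<bar>c' - c\<bar> / c" using cm cm' m by (simp add: field_simps abs_div)
  also have "\<dots> \<le> Mx * D / m" using cdiff cm m mM D0 by (intro frac_le) auto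
  finally have "(\<integral>x. \<bar>f x / c - f' x / c'\<bar> \<partial>M) \<le> 2 * Mx / m * D" by (simp add: field_simps)
  then show ?thesis unfolding dTV_def cf cf' D_def by (simp add: field_simps mult.commute mult.left_commute)
qed

lemma AE_in_A:
  assumes pd: "prob_density M p" and A: "A \<in> sets M" and pA: "(LINT x:A|M. p x) = 1"
    and pos: "\<forall>x\<in>space M. 0 < p x"
  shows "AE x in M. x \<in> A"
proof -
  have pm: "p \<in> borel_measurable M" and p0: "\<forall>x\<in>space M. 0 \<le> p x" and pi: "integrable M p"
    and p1: "(\<integral>x. p x \<partial>M) = 1" using pd unfolding prob_density_def by auto
  have ii: "integrable M (\<lambda>x. indicator A x * p x)"
    using integrable_mult_indicator[OF A pi] by simp
  have "(\<integral>x. indicator A x * p x \<partial>M) = 1" using pA by (simp add: set_lebesgue_integral_def)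
  hence "(\<integral>x. p x - indicator A x * p x \<partial>M) = 0" using pi ii p1 by simp
  moreover have "integrable M (\<lambda>x. p x - indicator A x * p x)" using pi ii by simp
  moreover have "AE x in M. 0 \<le> p x - indicator A x * p x"
    using p0 by (auto intro!: AE_I2 simp: indicator_def)
  ultimately have "AE x in M. p x - indicator A x * p x = 0"
    using integral_nonneg_eq_0_iff_AE by blast
  then show ?thesis using AE_space
    by eventually_elim (use pos in \<open>auto simp: indicator_def split: if_splits\<close>)
qed

theorem mainTheorem8:
  fixes M :: "'a measure" and L L0 :: "'a \<Rightarrow> real"
    and \<xi> m_L M_L m_pi M_pi :: real
  assumes "L \<in> borel_measurable M" and "L0 \<in> borel_measurable M"
    and "\<forall>\<theta>\<in>space M. 0 \<le> L \<theta> \<and> 0 \<le> L0 \<theta>"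
    and "0 \<le> \<xi>" and "\<xi> \<le> 1"
    and "0 < m_L" and "m_L \<le> 1" and "1 \<le> M_L"
    and "0 < m_pi" and "m_pi \<le> 1" and "1 \<le> M_pi"
  shows "\<exists>K :: real \<Rightarrow> real. \<forall>\<alpha> \<pi>0 \<pi>0' A.
           \<alpha> > -1 \<and> prob_density M \<pi>0 \<and> prob_density M \<pi>0'
           \<and> A \<in> sets M \<and> (LINT x:A|M. \<pi>0 x) = 1 \<and> (LINT x:A|M. \<pi>0' x) = 1
           \<and> (\<forall>\<theta>\<in>A. m_L \<le> L \<theta> \<and> L \<theta> \<le> M_L \<and> m_L \<le> L0 \<theta> \<and> L0 \<theta> \<le> M_L)
           \<and> (\<forall>\<theta>\<in>space M. m_pi \<le> \<pi>0 \<theta> \<and> \<pi>0 \<theta> \<le> M_pi \<and> m_pi \<le> \<pi>0' \<theta> \<and> \<pi>0' \<theta> \<le> M_pi)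
           \<longrightarrow> dTV M (gpp M L L0 \<xi> \<alpha> \<pi>0) (gpp M L L0 \<xi> \<alpha> \<pi>0') \<le> K \<alpha> * dTV M \<pi>0 \<pi>0'"
proof (intro exI[of _ "\<lambda>_. 2 * M_L^2 / m_L^2"] allI impI, elim conjE)
  fix \<alpha> :: real and p q :: "'a \<Rightarrow> real" and A
  assume al: "\<alpha> > -1" and pd: "prob_density M p" and qd: "prob_density M q" and A: "A \<in> sets M"
    and pA: "(LINT x:A|M. p x) = 1" and qA: "(LINT x:A|M. q x) = 1"
    and LA: "\<forall>\<theta>\<in>A. m_L \<le> L \<theta> \<and> L \<theta> \<le> M_L \<and> m_L \<le> L0 \<theta> \<and> L0 \<theta> \<le> M_L"
    and pb: "\<forall>\<theta>\<in>space M. m_pi \<le> p \<theta> \<and> p \<theta> \<le> M_pi \<and> m_pi \<le> q \<theta> \<and> q \<theta> \<le> M_pi"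
  have pm: "p \<in> borel_measurable M" and qm: "q \<in> borel_measurable M"
    using pd qd unfolding prob_density_def by auto
  have pos: "\<forall>x\<in>space M. 0 < p x" using pb assms by force
  have AEA: "AE x in M. x \<in> A" by (rule AE_in_A[OF pd A pA pos])
  define h where "h = gpp_unnorm L L0 \<xi> \<alpha> (\<lambda>_. 1)"
  have hm: "h \<in> borel_measurable M" unfolding h_def gpp_unnorm_def Let_def using assms by measurable
  have fm: "gpp_unnorm L L0 \<xi> \<alpha> p \<in> borel_measurable M" unfolding gpp_unnorm_def Let_def using assms pm by measurable
  have fm': "gpp_unnorm L L0 \<xi> \<alpha> q \<in> borel_measurable M" unfolding gpp_unnorm_def Let_def using assms qm by measurable
  have hb: "AE x in M. m_L^2 \<le> h x \<and> h x \<le> M_L^2"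
    using AEA
  proof eventually_elim
    fix x assume "x \<in> A"
    then have "m_L \<le> L x" "L x \<le> M_L" "m_L \<le> L0 x" "L0 x \<le> M_L" using LA by auto
    then show "m_L^2 \<le> h x \<and> h x \<le> M_L^2" unfolding h_def
      by (intro gpp_bounds) (use assms al in auto)
  qed
  have fe: "AE x in M. gpp_unnorm L L0 \<xi> \<alpha> p x = p x * h x"
    using AE_space
  proof eventually_elim
    fix x assume x: "x \<in> space M"
    show "gpp_unnorm L L0 \<xi> \<alpha> p x = p x * h x" unfolding h_def
      by (rule gpp_factor) (use assms pb al x in force)+
  qed
  have fe': "AE x in M. gpp_unnorm L L0 \<xi> \<alpha> q x = q x * h x"
    using AE_space
  proof eventually_elim
    fix x assume x: "x \<in> space M"
    show "gpp_unnorm L L0 \<xi> \<alpha> q x = q x * h x" unfolding h_def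
      by (rule gpp_factor) (use assms pb al x in force)+
  qed
  have mM: "m_L^2 \<le> M_L^2" using assms by (intro power_mono) auto
  have "dTV M (\<lambda>x. gpp_unnorm L L0 \<xi> \<alpha> p x / (\<integral>t. gpp_unnorm L L0 \<xi> \<alpha> p t \<partial>M))
     (\<lambda>x. gpp_unnorm L L0 \<xi> \<alpha> q x / (\<integral>t. gpp_unnorm L L0 \<xi> \<alpha> q t \<partial>M)) \<le> (2 * M_L^2 / m_L^2) * dTV M p q"
    by (rule tv_main[OF hm fm fm' pd qd _ mM hb fe fe']) (use assms in simp)
  then show "dTV M (gpp M L L0 \<xi> \<alpha> p) (gpp M L L0 \<xi> \<alpha> q) \<le> 2 * M_L^2 / m_L^2 * dTV M p q"
    unfolding gpp_def by simp
qed
end
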